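(* Let $\mathbb{T}$ be a time scale with $\sup\mathbb{T}=+\infty$ and bounded graininess, and let the control system $x^\Delta=Ax+Bu$ ($A\in\mathbb{R}^{n\times n}$, $B\in\mathbb{R}^{n\times m}$) on $\mathbb{T}$ be positive. If it is positively stabilizable, then for every $\lambda\in\operatorname{spec}(A)$ with $\lambda\notin\mathcal{S}_\mathbb{T}$ one has $\operatorname{rank}[\lambda I-A,\ B]=n$.
   Context: $x^\Delta$ denotes the delta derivative on the time scale $\mathbb{T}$ (a closed nonempty subset of $\mathbb{R}$); controls are piecewise continuous. The control system $x^\Delta=Ax+Bu$ is positive if for every $t_0\in\mathbb{T}$, every control $u$ with values in $\mathbb{R}^m_+$ and every $x_0\in\mathbb{R}^n_+$, the trajectory with $x(t_0)=x_0$ stays in $\mathbb{R}^n_+$. An autonomous system $x^\Delta=Mx$ is positive if trajectories starting in $\mathbb{R}^n_+$ stay in $\mathbb{R}^n_+$; it is uniformly exponentially stable (resp. positively uniformly exponentially stable) if there exist $K\ge1,\alpha>0$ and an open neighborhood $V$ of $0$ with $\|x(t)\|\le Ke^{-\alpha(t-t_0)}\|x_0\|$ for all $t_0\le t$ in $\mathbb{T}$ and all $x_0\in V$ (resp. all $x_0\in V\cap\mathbb{R}^n_+$). The system is positively stabilizable if there is $K\in\mathbb{R}^{m\times n}$ such that $x^\Delta=(A+BK)x$ is positive and positively uniformly exponentially stable. $\mathcal{S}_\mathbb{T}$ is the set of $\lambda\in\mathbb{C}$ for which the scalar equation $x^\Delta=\lambda x$ is uniformly exponentially stable. *)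

theory Defs
  imports "HOL-Analysis.Analysis"
begin

definition time_scale :: "real set \<Rightarrow> bool" where
  "time_scale T \<longleftrightarrow> closed T \<and> T \<noteq> {}"

definition sigma_ts :: "real set \<Rightarrow> real \<Rightarrow> real" where
  "sigma_ts T t = (if \<exists>s\<in>T. s > t then Inf {s\<in>T. s > t} else t)"

definition graininess :: "real set \<Rightarrow> real \<Rightarrow> real" where
  "graininess T t = sigma_ts T t - t"

definition unbounded_above :: "real set \<Rightarrow> bool" where
  "unbounded_above T \<longleftrightarrow> (\<forall>x. \<exists>t\<in>T. t > x)"

definition bounded_graininess :: "real set \<Rightarrow> bool" where
  "bounded_graininess T \<longleftrightarrow> (\<exists>M. \<forall>t\<in>T. graininess T t \<le> M)"

definition has_delta_derivative ::
  "real set \<Rightarrow> (real \<Rightarrow> 'a::real_normed_vector) \<Rightarrow> 'a \<Rightarrow> real \<Rightarrow> bool" where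
  "has_delta_derivative T f f' t \<longleftrightarrow> t \<in> T \<and>
     (\<forall>\<epsilon>>0. \<exists>\<delta>>0. \<forall>s\<in>T. \<bar>s - t\<bar> < \<delta> \<longrightarrow>
        norm (f (sigma_ts T t) - f s - (sigma_ts T t - s) *\<^sub>R f') \<le> \<epsilon> * \<bar>sigma_ts T t - s\<bar>)"

definition auto_solution ::
  "real set \<Rightarrow> ('a::real_normed_vector \<Rightarrow> 'a) \<Rightarrow> real \<Rightarrow> (real \<Rightarrow> 'a) \<Rightarrow> bool" where
  "auto_solution T F t0 x \<longleftrightarrow>
     (\<forall>t\<in>T. t0 \<le> t \<longrightarrow> has_delta_derivative (T \<inter> {t0..}) x (F (x t)) t)"

definition nonneg_vec :: "real^'n \<Rightarrow> bool" where
  "nonneg_vec v \<longleftrightarrow> (\<forall>i. 0 \<le> v $ i)"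

definition positive_auto :: "real set \<Rightarrow> real^'n^'n \<Rightarrow> bool" where
  "positive_auto T M \<longleftrightarrow>
     (\<forall>t0\<in>T. \<forall>x. auto_solution T (\<lambda>v. M *v v) t0 x \<and> nonneg_vec (x t0) \<longrightarrow>
        (\<forall>t\<in>T. t0 \<le> t \<longrightarrow> nonneg_vec (x t)))"

definition ues_on ::
  "real set \<Rightarrow> ('a::real_normed_vector \<Rightarrow> 'a) \<Rightarrow> 'a set \<Rightarrow> bool" where
  "ues_on T F W \<longleftrightarrow>
     (\<exists>K\<ge>1. \<exists>\<alpha>>0. \<exists>V. open V \<and> 0 \<in> V \<and>
        (\<forall>t0\<in>T. \<forall>x. auto_solution T F t0 x \<and> x t0 \<in> V \<inter> W \<longrightarrow>
           (\<forall>t\<in>T. t0 \<le> t \<longrightarrow> norm (x t) \<le> K * exp (- \<alpha> * (t - t0)) * norm (x t0))))"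

definition ues :: "real set \<Rightarrow> ('a::real_normed_vector \<Rightarrow> 'a) \<Rightarrow> bool" where
  "ues T F \<longleftrightarrow> ues_on T F UNIV"

definition pos_ues :: "real set \<Rightarrow> real^'n^'n \<Rightarrow> bool" where
  "pos_ues T M \<longleftrightarrow> ues_on T (\<lambda>v. M *v v) {v. nonneg_vec v}"

definition stab_set :: "real set \<Rightarrow> complex set" where
  "stab_set T = {c. ues T (\<lambda>z::complex. c * z)}"

definition piecewise_continuous_ts :: "real set \<Rightarrow> (real \<Rightarrow> 'a::real_normed_vector) \<Rightarrow> bool" where
  "piecewise_continuous_ts T u \<longleftrightarrow>
     (\<forall>a b. finite {t\<in>T \<inter> {a..b}. \<not> continuous (at t within T) u}) \<and>
     (\<forall>t\<in>T. (\<exists>l. (u \<longlongrightarrow> l) (at t within (T \<inter> {..<t}))) \<and>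
             (\<exists>l. (u \<longlongrightarrow> l) (at t within (T \<inter> {t<..}))))"

definition ctrl_trajectory ::
  "real set \<Rightarrow> real^'n^'n \<Rightarrow> real^'m^'n \<Rightarrow> (real \<Rightarrow> real^'m) \<Rightarrow> real \<Rightarrow> (real \<Rightarrow> real^'n) \<Rightarrow> bool" where
  "ctrl_trajectory T A B u t0 x \<longleftrightarrow>
     continuous_on (T \<inter> {t0..}) x \<and>
     (\<forall>t\<in>T. t0 \<le> t \<and> (continuous (at t within T) u \<or> sigma_ts T t > t) \<longrightarrow>
        has_delta_derivative (T \<inter> {t0..}) x (A *v x t + B *v u t) t)"

definition positive_ctrl :: "real set \<Rightarrow> real^'n^'n \<Rightarrow> real^'m^'n \<Rightarrow> bool" where
  "positive_ctrl T A B \<longleftrightarrow>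
     (\<forall>t0\<in>T. \<forall>u x. piecewise_continuous_ts T u \<and> (\<forall>t\<in>T. nonneg_vec (u t)) \<and>
        ctrl_trajectory T A B u t0 x \<and> nonneg_vec (x t0) \<longrightarrow>
        (\<forall>t\<in>T. t0 \<le> t \<longrightarrow> nonneg_vec (x t)))"

definition positively_stabilizable :: "real set \<Rightarrow> real^'n^'n \<Rightarrow> real^'m^'n \<Rightarrow> bool" where
  "positively_stabilizable T A B \<longleftrightarrow>
     (\<exists>K :: real^'n^'m. positive_auto T (A + B ** K) \<and> pos_ues T (A + B ** K))"

definition cmat :: "real^'n^'m \<Rightarrow> complex^'n^'m" where
  "cmat A = (\<chi> i j. complex_of_real (A $ i $ j))"

definition spec :: "real^'n^'n \<Rightarrow> complex set" where
  "spec A = {c. \<exists>v::complex^'n. v \<noteq> 0 \<and> cmat A *v v = c *s v}"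

definition pbh_matrix :: "complex \<Rightarrow> real^'n^'n \<Rightarrow> real^'m^'n \<Rightarrow> complex^('n + 'm)^'n" where
  "pbh_matrix c A B = (\<chi> i j. case j of
      Inl k \<Rightarrow> (mat c - cmat A) $ i $ k
    | Inr k \<Rightarrow> cmat B $ i $ k)"

end

theory Submission
  imports Defs
begin

lemma rank_full_if_indep:
  fixes P :: "'a::field^'k^'n"
  assumes H: "\<And>c. (\<Sum>i\<in>UNIV. c i *s row i P) = 0 \<Longrightarrow> (\<forall>i. c i = 0)"
  shows "rank P = CARD('n)"
proof -
  have inj: "inj (\<lambda>i. row i P)"
  proof (rule injI)
    fix i j assume eq: "row i P = row j P"
    show "i = j"
    proof (rule ccontr)
      assume ij: "i \<noteq> j"
      define c where "c = (\<lambda>k. if k = i then (1::'a) else if k = j then -1 else 0)"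
      have "(\<Sum>k\<in>UNIV. c k *s row k P) = (\<Sum>k\<in>{i,j}. c k *s row k P)"
        by (rule sum.mono_neutral_right) (auto simp: c_def)
      also have "\<dots> = row i P - row j P" using ij by (simp add: c_def)
      also have "\<dots> = 0" using eq by simp
      finally have "\<forall>k. c k = 0" using H by blast
      then show False by (metis c_def one_neq_zero)
    qed
  qed
  have rows: "rows P = range (\<lambda>i. row i P)" by (auto simp: rows_def)
  have ind: "vec.independent (rows P)"
    unfolding vec.independent_explicit
  proof (intro conjI allI impI)
    show "finite (rows P)" using rows by simp
    fix c :: "'a^'k \<Rightarrow> 'a" assume s: "(\<Sum>v\<in>rows P. c v *s v) = 0"
    have "(\<Sum>i\<in>UNIV. c (row i P) *s row i P) = 0"
      using s unfolding rows sum.reindex[OF inj] by (simp add: o_def)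
    then have "\<forall>i. c (row i P) = 0" using H[of "\<lambda>i. c (row i P)"] by blast
    then show "\<forall>v\<in>rows P. c v = 0" using rows by auto
  qed
  have "rank P = vec.dim (rows P)" by (simp add: row_rank_def_gen)
  also have "\<dots> = card (rows P)" using ind by (rule vec.dim_eq_card_independent)
  also have "\<dots> = CARD('n)" unfolding rows by (simp add: card_image[OF inj])
  finally show ?thesis .
qed

lemma cmat_mul: "cmat (A + B ** K) $ i $ k = complex_of_real (A$i$k) + (\<Sum>j\<in>UNIV. complex_of_real (B$i$j) * complex_of_real (K$j$k))"
  by (simp add: cmat_def matrix_matrix_mult_def)

lemma eigen_from_pbh:
  fixes A :: "real^'n^'n" and B :: "real^'m^'n" and K :: "real^'n^'m"
  assumes "rank (pbh_matrix c A B) \<noteq> CARD('n)"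
  shows "\<exists>v. v \<noteq> 0 \<and> cmat (A + B ** K) *v v = c *s v"
proof -
  let ?P = "pbh_matrix c A B"
  obtain w where w: "(\<Sum>i\<in>UNIV. w i *s row i ?P) = 0" and wi: "\<exists>i. w i \<noteq> 0"
    using rank_full_if_indep[of ?P] assms by blast
  have hA: "(\<Sum>i\<in>UNIV. w i * complex_of_real (A$i$k)) = c * w k" for k
  proof -
    have "(\<Sum>i\<in>UNIV. w i *s row i ?P) $ Inl k = 0" using w by simp
    then have "(\<Sum>i\<in>UNIV. w i * ((if i = k then c else 0) - complex_of_real (A$i$k))) = 0"
      by (simp add: row_def pbh_matrix_def mat_def cmat_def)
    then have "(\<Sum>i\<in>UNIV. w i * (if i = k then c else 0)) - (\<Sum>i\<in>UNIV. w i * complex_of_real (A$i$k)) = 0"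
      by (simp only: right_diff_distrib sum_subtractf)
    moreover have "(\<Sum>i\<in>UNIV. w i * (if i = k then c else 0)) = c * w k"
    proof -
      have "(\<Sum>i\<in>UNIV. w i * (if i = k then c else 0)) = (\<Sum>i\<in>UNIV. if i = k then w i * c else 0)"
        by (rule sum.cong) auto
      then show ?thesis by (simp add: mult.commute)
    qed
    ultimately show ?thesis by simp
  qed
  have hB: "(\<Sum>i\<in>UNIV. w i * complex_of_real (B$i$j)) = 0" for j
  proof -
    have "(\<Sum>i\<in>UNIV. w i *s row i ?P) $ Inr j = 0" using w by simp
    then show ?thesis by (simp add: row_def pbh_matrix_def cmat_def)
  qed
  let ?N = "mat c - cmat (A + B ** K) :: complex^'n^'n"
  let ?w = "(\<chi> i. w i) :: complex^'n"
  have Nw: "transpose ?N *v ?w = 0"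
  proof -
    have "(\<Sum>i\<in>UNIV. ((if i = k then c else 0) - cmat (A + B ** K) $ i $ k) * w i) = 0" for k
    proof -
      have e1: "(\<Sum>i\<in>UNIV. cmat (A + B ** K) $ i $ k * w i) =
         (\<Sum>i\<in>UNIV. w i * complex_of_real (A$i$k)) +
         (\<Sum>j\<in>UNIV. complex_of_real (K$j$k) * (\<Sum>i\<in>UNIV. w i * complex_of_real (B$i$j)))"
      proof -
        have "(\<Sum>i\<in>UNIV. cmat (A + B ** K) $ i $ k * w i) =
          (\<Sum>i\<in>UNIV. w i * complex_of_real (A$i$k) + (\<Sum>j\<in>UNIV. w i * complex_of_real (B$i$j) * complex_of_real (K$j$k)))"
          by (rule sum.cong) (auto simp: cmat_mul distrib_left sum_distrib_left mult_ac)
        also have "\<dots> = (\<Sum>i\<in>UNIV. w i * complex_of_real (A$i$k)) + (\<Sum>i\<in>UNIV. \<Sum>j\<in>UNIV. w i * complex_of_real (B$i$j) * complex_of_real (K$j$k))"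
          by (rule sum.distrib)
        also have "(\<Sum>i\<in>UNIV. \<Sum>j\<in>UNIV. w i * complex_of_real (B$i$j) * complex_of_real (K$j$k))
           = (\<Sum>j\<in>UNIV. \<Sum>i\<in>UNIV. w i * complex_of_real (B$i$j) * complex_of_real (K$j$k))"
          by (rule sum.swap)
        also have "\<dots> = (\<Sum>j\<in>UNIV. complex_of_real (K$j$k) * (\<Sum>i\<in>UNIV. w i * complex_of_real (B$i$j)))"
          by (simp add: sum_distrib_left mult_ac)
        finally show ?thesis .
      qed
      have e2: "(\<Sum>i\<in>UNIV. (if i = k then c else 0) * w i) = c * w k"
      proof -
        have "(\<Sum>i\<in>UNIV. (if i = k then c else 0) * w i) = (\<Sum>i\<in>UNIV. if i = k then c * w i else 0)"
          by (rule sum.cong) auto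
        then show ?thesis by simp
      qed
      show ?thesis
        by (simp only: left_diff_distrib sum_subtractf e1 e2 hA hB) simp
    qed
    then show ?thesis
      by (simp add: vec_eq_iff matrix_vector_mult_def transpose_def mat_def)
  qed
  have "?w \<noteq> 0" using wi by (auto simp: vec_eq_iff)
  then have "\<not> inj ((*v) (transpose ?N))" using Nw
    by (metis injD matrix_vector_mult_0_right)
  then have "det (transpose ?N) = 0"
    using det_nz_iff_inj_gen[of "(*v) (transpose ?N)"] by simp
  then have "det ?N = 0" by simp
  then have "\<not> inj ((*v) ?N)"
    using det_nz_iff_inj_gen[of "(*v) ?N"] by simp
  then obtain x y where xy: "x \<noteq> y" "?N *v x = ?N *v y" by (auto simp: inj_def)
  define v where "v = x - y"
  have "v \<noteq> 0" "?N *v v = 0" using xy by (auto simp: v_def matrix_vector_mult_diff_distrib)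
  moreover have "?N *v v = c *s v - cmat (A + B ** K) *v v"
  proof -
    have "(\<Sum>j\<in>UNIV. (if i = j then c else 0) * v $ j) = c * v $ i" for i
    proof -
      have "(\<Sum>j\<in>UNIV. (if i = j then c else 0) * v $ j) = (\<Sum>j\<in>UNIV. if i = j then c * v $ j else 0)"
        by (rule sum.cong) auto
      then show ?thesis by simp
    qed
    then show ?thesis
      by (simp add: vec_eq_iff matrix_vector_mult_def mat_def left_diff_distrib sum_subtractf del: vec_lambda_beta) simp
  qed
  ultimately show ?thesis by (metis eq_iff_diff_eq_0)
qed


lemma hd_linear:
  assumes L: "bounded_linear L" and h: "has_delta_derivative T f f' t"
  shows "has_delta_derivative T (\<lambda>s. L (f s)) (L f') t"
proof -
  obtain C where C: "C > 0" "\<And>x. norm (L x) \<le> norm x * C"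
    using bounded_linear.pos_bounded[OF L] by blast
  interpret bl: bounded_linear L by (rule L)
  show ?thesis unfolding has_delta_derivative_def
  proof (intro conjI allI impI)
    show "t \<in> T" using h by (simp add: has_delta_derivative_def)
    fix e :: real assume e: "e > 0"
    then obtain d where d: "d > 0" and D: "\<forall>s\<in>T. \<bar>s - t\<bar> < d \<longrightarrow>
        norm (f (sigma_ts T t) - f s - (sigma_ts T t - s) *\<^sub>R f') \<le> (e / C) * \<bar>sigma_ts T t - s\<bar>"
      using h C(1) unfolding has_delta_derivative_def by (meson divide_pos_pos)
    show "\<exists>d>0. \<forall>s\<in>T. \<bar>s - t\<bar> < d \<longrightarrow>
        norm (L (f (sigma_ts T t)) - L (f s) - (sigma_ts T t - s) *\<^sub>R L f') \<le> e * \<bar>sigma_ts T t - s\<bar>"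
    proof (intro exI conjI ballI impI, fact d)
      fix s assume s: "s \<in> T" "\<bar>s - t\<bar> < d"
      have "L (f (sigma_ts T t)) - L (f s) - (sigma_ts T t - s) *\<^sub>R L f'
          = L (f (sigma_ts T t) - f s - (sigma_ts T t - s) *\<^sub>R f')"
        by (simp add: bl.diff bl.scaleR)
      also have "norm \<dots> \<le> norm (f (sigma_ts T t) - f s - (sigma_ts T t - s) *\<^sub>R f') * C" by (rule C(2))
      also have "\<dots> \<le> (e / C) * \<bar>sigma_ts T t - s\<bar> * C"
        using D s C(1) by (intro mult_right_mono) auto
      also have "\<dots> = e * \<bar>sigma_ts T t - s\<bar>" using C(1) by simp
      finally show "norm (L (f (sigma_ts T t)) - L (f s) - (sigma_ts T t - s) *\<^sub>R L f') \<le> e * \<bar>sigma_ts T t - s\<bar>" .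
    qed
  qed
qed

lemma hd_add:
  assumes h1: "has_delta_derivative T f f' t" and h2: "has_delta_derivative T g g' t"
  shows "has_delta_derivative T (\<lambda>s. f s + g s) (f' + g') t"
  unfolding has_delta_derivative_def
proof (intro conjI allI impI)
  show "t \<in> T" using h1 by (simp add: has_delta_derivative_def)
  fix e :: real assume e: "e > 0"
  then have e2: "e/2 > 0" by simp
  obtain d1 where d1: "d1 > 0" and D1: "\<forall>s\<in>T. \<bar>s - t\<bar> < d1 \<longrightarrow>
        norm (f (sigma_ts T t) - f s - (sigma_ts T t - s) *\<^sub>R f') \<le> (e/2) * \<bar>sigma_ts T t - s\<bar>"
    using h1 e2 unfolding has_delta_derivative_def by blast
  obtain d2 where d2: "d2 > 0" and D2: "\<forall>s\<in>T. \<bar>s - t\<bar> < d2 \<longrightarrow>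
        norm (g (sigma_ts T t) - g s - (sigma_ts T t - s) *\<^sub>R g') \<le> (e/2) * \<bar>sigma_ts T t - s\<bar>"
    using h2 e2 unfolding has_delta_derivative_def by blast
  show "\<exists>d>0. \<forall>s\<in>T. \<bar>s - t\<bar> < d \<longrightarrow>
        norm (f (sigma_ts T t) + g (sigma_ts T t) - (f s + g s) - (sigma_ts T t - s) *\<^sub>R (f' + g')) \<le> e * \<bar>sigma_ts T t - s\<bar>"
  proof (intro exI conjI ballI impI)
    show "min d1 d2 > 0" using d1 d2 by simp
    fix s assume s: "s \<in> T" "\<bar>s - t\<bar> < min d1 d2"
    have "f (sigma_ts T t) + g (sigma_ts T t) - (f s + g s) - (sigma_ts T t - s) *\<^sub>R (f' + g')
       = (f (sigma_ts T t) - f s - (sigma_ts T t - s) *\<^sub>R f') + (g (sigma_ts T t) - g s - (sigma_ts T t - s) *\<^sub>R g')"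
      by (simp add: algebra_simps)
    also have "norm \<dots> \<le> norm (f (sigma_ts T t) - f s - (sigma_ts T t - s) *\<^sub>R f') + norm (g (sigma_ts T t) - g s - (sigma_ts T t - s) *\<^sub>R g')"
      by (rule norm_triangle_ineq)
    also have "\<dots> \<le> (e/2) * \<bar>sigma_ts T t - s\<bar> + (e/2) * \<bar>sigma_ts T t - s\<bar>"
      using D1 D2 s by (intro add_mono) auto
    finally show "norm (f (sigma_ts T t) + g (sigma_ts T t) - (f s + g s) - (sigma_ts T t - s) *\<^sub>R (f' + g')) \<le> e * \<bar>sigma_ts T t - s\<bar>"
      by simp
  qed
qed

lemma sol_add:
  fixes M :: "real^'n^'n"
  assumes "auto_solution T (\<lambda>v. M *v v) t0 x" "auto_solution T (\<lambda>v. M *v v) t0 y"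
  shows "auto_solution T (\<lambda>v. M *v v) t0 (\<lambda>s. x s + y s)"
  unfolding auto_solution_def
proof (intro ballI impI)
  fix t assume "t \<in> T" "t0 \<le> t"
  then have "has_delta_derivative (T \<inter> {t0..}) (\<lambda>s. x s + y s) (M *v x t + M *v y t) t"
    using assms unfolding auto_solution_def by (blast intro: hd_add)
  then show "has_delta_derivative (T \<inter> {t0..}) (\<lambda>s. x s + y s) (M *v (x t + y t)) t"
    by (simp add: matrix_vector_right_distrib)
qed

lemma sol_scale:
  fixes M :: "real^'n^'n"
  assumes "auto_solution T (\<lambda>v. M *v v) t0 x"
  shows "auto_solution T (\<lambda>v. M *v v) t0 (\<lambda>s. c *\<^sub>R x s)"
  unfolding auto_solution_def
proof (intro ballI impI)
  fix t assume "t \<in> T" "t0 \<le> t"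
  then have "has_delta_derivative (T \<inter> {t0..}) (\<lambda>s. c *\<^sub>R x s) (c *\<^sub>R (M *v x t)) t"
    using assms hd_linear[OF bounded_linear_scaleR_right[of c]] unfolding auto_solution_def by blast
  then show "has_delta_derivative (T \<inter> {t0..}) (\<lambda>s. c *\<^sub>R x s) (M *v (c *\<^sub>R x t)) t"
    by (simp add: matrix_vector_mult_scaleR)
qed

lemma norm_abs_vec: "norm (\<chi> i. \<bar>a $ i\<bar>) = norm (a::real^'n)"
  by (rule antisym; rule norm_le_componentwise_cart; simp)

lemma bound_all:
  fixes M :: "real^'n^'n"
  assumes pos: "positive_auto T M" and pu: "pos_ues T M"
    and ex: "\<And>t0 p. t0 \<in> T \<Longrightarrow> \<exists>y. auto_solution T (\<lambda>v. M *v v) t0 y \<and> y t0 = p"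
  shows "\<exists>K \<alpha>. \<alpha> > 0 \<and> K \<ge> 1 \<and> (\<forall>t0\<in>T. \<forall>x. auto_solution T (\<lambda>v. M *v v) t0 x \<longrightarrow>
            (\<forall>t\<in>T. t0 \<le> t \<longrightarrow> norm (x t) \<le> K * exp (- \<alpha> * (t - t0)) * norm (x t0)))"
proof -
  obtain K \<alpha> V where K: "K \<ge> 1" and al: "\<alpha> > 0" and V: "open V" "0 \<in> V"
    and B: "\<And>t0 x t. t0 \<in> T \<Longrightarrow> auto_solution T (\<lambda>v. M *v v) t0 x \<Longrightarrow> x t0 \<in> V \<Longrightarrow> nonneg_vec (x t0)
       \<Longrightarrow> t \<in> T \<Longrightarrow> t0 \<le> t \<Longrightarrow> norm (x t) \<le> K * exp (- \<alpha> * (t - t0)) * norm (x t0)"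
    using pu unfolding pos_ues_def ues_on_def by blast
  obtain r where r: "r > 0" "ball 0 r \<subseteq> V" using V open_contains_ball by blast
  have P: "\<And>t0 x t. t0 \<in> T \<Longrightarrow> auto_solution T (\<lambda>v. M *v v) t0 x \<Longrightarrow> nonneg_vec (x t0)
       \<Longrightarrow> t \<in> T \<Longrightarrow> t0 \<le> t \<Longrightarrow> nonneg_vec (x t)"
    using pos unfolding positive_auto_def by blast
  show ?thesis
  proof (intro exI conjI ballI allI impI, rule al, rule K)
    fix t0 x t assume t0: "t0 \<in> T" and xs: "auto_solution T (\<lambda>v. M *v v) t0 x" and t: "t \<in> T" "t0 \<le> t"
    define a where "a = x t0"
    define q where "q = (\<chi> i. \<bar>a $ i\<bar>)"
    define c where "c = r / (2 * (norm a + 1))"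
    have "norm a + 1 > 0" by (simp add: add_nonneg_pos)
    then have c: "c > 0" unfolding c_def using r by simp
    have nq: "norm q = norm a" by (simp add: q_def norm_abs_vec)
    have "c * norm a < r"
    proof -
      have "c * norm a = r * (norm a / (2 * (norm a + 1)))" by (simp add: c_def)
      also have "\<dots> < r * 1"
      proof (rule mult_strict_left_mono)
        have "norm a < 2 * (norm a + 1)" by (smt (verit) norm_ge_zero)
        then show "norm a / (2 * (norm a + 1)) < 1"
          using \<open>norm a + 1 > 0\<close> by (simp add: divide_less_eq)
      qed (use r in auto)
      finally show ?thesis by simp
    qed
    then have inV: "c *\<^sub>R q \<in> V" using r c nq by (auto simp: dist_norm)
    obtain y where ys: "auto_solution T (\<lambda>v. M *v v) t0 y" and y0: "y t0 = c *\<^sub>R q"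
      using ex[OF t0] by blast
    have nnq: "nonneg_vec (c *\<^sub>R q)" using c by (simp add: nonneg_vec_def q_def)
    have yb: "norm (y t) \<le> K * exp (- \<alpha> * (t - t0)) * (c * norm a)"
      using B[OF t0 ys _ _ t] y0 inV nnq c nq by simp
    have s1: "auto_solution T (\<lambda>v. M *v v) t0 (\<lambda>s. y s + c *\<^sub>R x s)"
      by (intro sol_add sol_scale ys xs)
    have s2: "auto_solution T (\<lambda>v. M *v v) t0 (\<lambda>s. y s + (- c) *\<^sub>R x s)"
      by (intro sol_add sol_scale ys xs)
    have n1: "nonneg_vec (y t0 + c *\<^sub>R x t0)" unfolding nonneg_vec_def
    proof
      fix i
      have "0 \<le> \<bar>a$i\<bar> + a$i" by (smt (verit) abs_ge_minus_self)
      then have "0 \<le> c * (\<bar>a$i\<bar> + a$i)" using c by (intro mult_nonneg_nonneg) auto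
      then show "0 \<le> (y t0 + c *\<^sub>R x t0) $ i" by (simp add: y0 q_def a_def distrib_left)
    qed
    have n2: "nonneg_vec (y t0 + (- c) *\<^sub>R x t0)" unfolding nonneg_vec_def
    proof
      fix i
      have "0 \<le> \<bar>a$i\<bar> - a$i" by (smt (verit) abs_ge_self)
      then have "0 \<le> c * (\<bar>a$i\<bar> - a$i)" using c by (intro mult_nonneg_nonneg) auto
      then show "0 \<le> (y t0 + (- c) *\<^sub>R x t0) $ i" by (simp add: y0 q_def a_def right_diff_distrib)
    qed
    have p1: "nonneg_vec (y t + c *\<^sub>R x t)" using P[OF t0 s1 _ t] n1 by simp
    have p2: "nonneg_vec (y t + (- c) *\<^sub>R x t)" using P[OF t0 s2 _ t] n2 by simp
    have "norm (c *\<^sub>R x t) \<le> norm (y t)"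
    proof (rule norm_le_componentwise_cart)
      fix i
      have "0 \<le> y t $ i + c * x t $ i" "0 \<le> y t $ i - c * x t $ i"
        using p1 p2 by (auto simp: nonneg_vec_def)
      then show "norm ((c *\<^sub>R x t) $ i) \<le> norm (y t $ i)" by auto
    qed
    then have "c * norm (x t) \<le> c * (K * exp (- \<alpha> * (t - t0)) * norm a)"
    proof -
      have "c * norm (x t) \<le> norm (y t)" using \<open>norm (c *\<^sub>R x t) \<le> norm (y t)\<close> c by simp
      also have "\<dots> \<le> K * exp (- \<alpha> * (t - t0)) * (c * norm a)" by (rule yb)
      finally show ?thesis by (simp add: mult_ac)
    qed
    then show "norm (x t) \<le> K * exp (- \<alpha> * (t - t0)) * norm (x t0)"
      using c by (simp add: a_def)
  qed
qed


lemma stab_from_bound: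
  fixes M :: "real^'n^'n" and v :: "complex^'n"
  assumes bnd: "\<alpha> > 0" "K \<ge> 1" "\<And>t0 x t. t0 \<in> T \<Longrightarrow> auto_solution T (\<lambda>v. M *v v) t0 x \<Longrightarrow>
            t \<in> T \<Longrightarrow> t0 \<le> t \<Longrightarrow> norm (x t) \<le> K * exp (- \<alpha> * (t - t0)) * norm (x t0)"
    and v: "v \<noteq> 0" and ev: "cmat M *v v = lam *s v"
  shows "lam \<in> stab_set T"
proof -
  obtain i where vi: "v $ i \<noteq> 0" using v by (auto simp: vec_eq_iff)
  define S where "S = (\<Sum>j\<in>UNIV. cmod (v $ j))"
  define K' where "K' = max 1 (2 * K * S / cmod (v $ i))"
  have evj: "(\<Sum>k\<in>UNIV. complex_of_real (M$j$k) * v$k) = lam * v$j" for j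
    using ev by (simp add: vec_eq_iff matrix_vector_mult_def cmat_def)
  define L1 where "L1 = (\<lambda>c::complex. (\<chi> j. Re (c * v$j)) :: real^'n)"
  define L2 where "L2 = (\<lambda>c::complex. (\<chi> j. Im (c * v$j)) :: real^'n)"
  have bl1: "bounded_linear L1"
    unfolding linear_conv_bounded_linear[symmetric] L1_def
    by (rule linearI) (simp_all add: vec_eq_iff algebra_simps)
  have bl2: "bounded_linear L2"
    unfolding linear_conv_bounded_linear[symmetric] L2_def
    by (rule linearI) (simp_all add: vec_eq_iff algebra_simps)
  have m1: "L1 (lam * c) = M *v L1 c" for c
  proof -
    have "Re (lam * c * v$j) = (\<Sum>k\<in>UNIV. M$j$k * Re (c * v$k))" for j
    proof -
      have "lam * c * v$j = c * (\<Sum>k\<in>UNIV. complex_of_real (M$j$k) * v$k)" using evj[of j] by (simp add: mult_ac)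
      also have "\<dots> = (\<Sum>k\<in>UNIV. complex_of_real (M$j$k) * (c * v$k))" by (simp add: sum_distrib_left mult_ac)
      finally show ?thesis by (simp add: Re_sum)
    qed
    then show ?thesis by (simp add: L1_def vec_eq_iff matrix_vector_mult_def)
  qed
  have m2: "L2 (lam * c) = M *v L2 c" for c
  proof -
    have "Im (lam * c * v$j) = (\<Sum>k\<in>UNIV. M$j$k * Im (c * v$k))" for j
    proof -
      have "lam * c * v$j = c * (\<Sum>k\<in>UNIV. complex_of_real (M$j$k) * v$k)" using evj[of j] by (simp add: mult_ac)
      also have "\<dots> = (\<Sum>k\<in>UNIV. complex_of_real (M$j$k) * (c * v$k))" by (simp add: sum_distrib_left mult_ac)
      finally show ?thesis by (simp add: Im_sum)
    qed
    then show ?thesis by (simp add: L2_def vec_eq_iff matrix_vector_mult_def)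
  qed
  have nL1: "norm (L1 c) \<le> cmod c * S" for c
  proof -
    have "norm (L1 c) \<le> (\<Sum>j\<in>UNIV. \<bar>L1 c $ j\<bar>)" by (rule norm_le_l1_cart)
    also have "\<dots> \<le> (\<Sum>j\<in>UNIV. cmod c * cmod (v$j))"
      by (rule sum_mono) (unfold L1_def vec_lambda_beta norm_mult[symmetric], rule abs_Re_le_cmod)
    finally show ?thesis by (simp add: S_def sum_distrib_left)
  qed
  have nL2: "norm (L2 c) \<le> cmod c * S" for c
  proof -
    have "norm (L2 c) \<le> (\<Sum>j\<in>UNIV. \<bar>L2 c $ j\<bar>)" by (rule norm_le_l1_cart)
    also have "\<dots> \<le> (\<Sum>j\<in>UNIV. cmod c * cmod (v$j))"
      by (rule sum_mono) (unfold L2_def vec_lambda_beta norm_mult[symmetric], rule abs_Im_le_cmod)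
    finally show ?thesis by (simp add: S_def sum_distrib_left)
  qed
  have low: "cmod c * cmod (v$i) \<le> norm (L1 c) + norm (L2 c)" for c
  proof -
    have "cmod c * cmod (v$i) = cmod (c * v$i)" by (simp add: norm_mult)
    also have "\<dots> \<le> \<bar>Re (c * v$i)\<bar> + \<bar>Im (c * v$i)\<bar>" by (rule cmod_le)
    also have "\<dots> \<le> norm (L1 c) + norm (L2 c)"
      using component_le_norm_cart[of "L1 c" i] component_le_norm_cart[of "L2 c" i]
      by (simp add: L1_def L2_def)
    finally show ?thesis .
  qed
  have sol1: "auto_solution T (\<lambda>u. M *v u) t0 (\<lambda>s. L1 (z s))"
    if "auto_solution T (\<lambda>w. lam * w) t0 z" for t0 z
    unfolding auto_solution_def
  proof (intro ballI impI)
    fix t assume "t \<in> T" "t0 \<le> t"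
    then have "has_delta_derivative (T \<inter> {t0..}) (\<lambda>s. L1 (z s)) (L1 (lam * z t)) t"
      using that hd_linear[OF bl1] unfolding auto_solution_def by blast
    then show "has_delta_derivative (T \<inter> {t0..}) (\<lambda>s. L1 (z s)) (M *v L1 (z t)) t"
      by (simp add: m1)
  qed
  have sol2: "auto_solution T (\<lambda>u. M *v u) t0 (\<lambda>s. L2 (z s))"
    if "auto_solution T (\<lambda>w. lam * w) t0 z" for t0 z
    unfolding auto_solution_def
  proof (intro ballI impI)
    fix t assume "t \<in> T" "t0 \<le> t"
    then have "has_delta_derivative (T \<inter> {t0..}) (\<lambda>s. L2 (z s)) (L2 (lam * z t)) t"
      using that hd_linear[OF bl2] unfolding auto_solution_def by blast
    then show "has_delta_derivative (T \<inter> {t0..}) (\<lambda>s. L2 (z s)) (M *v L2 (z t)) t"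
      by (simp add: m2)
  qed
  have vpos: "cmod (v$i) > 0" using vi by simp
  show ?thesis
    unfolding stab_set_def ues_def ues_on_def mem_Collect_eq
  proof (intro exI conjI ballI allI impI)
    show "K' \<ge> 1" by (simp add: K'_def)
    show "\<alpha> > 0" by (rule bnd(1))
    show "open (UNIV :: complex set)" by simp
    show "(0::complex) \<in> UNIV" by simp
    fix t0 z t assume t0: "t0 \<in> T" and zs: "auto_solution T (\<lambda>w. lam * w) t0 z \<and> z t0 \<in> UNIV \<inter> UNIV"
      and t: "t \<in> T" "t0 \<le> t"
    let ?E = "exp (- \<alpha> * (t - t0))"
    have "cmod (z t) * cmod (v$i) \<le> norm (L1 (z t)) + norm (L2 (z t))" by (rule low)
    also have "\<dots> \<le> K * ?E * norm (L1 (z t0)) + K * ?E * norm (L2 (z t0))"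
      using bnd(3)[OF t0 sol1 t] bnd(3)[OF t0 sol2 t] zs by (intro add_mono) auto
    also have "\<dots> \<le> K * ?E * (cmod (z t0) * S) + K * ?E * (cmod (z t0) * S)"
      using bnd(2) by (intro add_mono mult_left_mono nL1 nL2) auto
    also have "\<dots> = (2 * K * S) * ?E * cmod (z t0)" by simp
    finally have "cmod (z t) \<le> (2 * K * S / cmod (v$i)) * ?E * cmod (z t0)"
      using vpos by (simp add: field_simps)
    also have "\<dots> \<le> K' * ?E * cmod (z t0)"
      by (intro mult_right_mono) (auto simp: K'_def)
    finally show "norm (z t) \<le> K' * exp (- \<alpha> * (t - t0)) * norm (z t0)" by simp
  qed
qed


definition gT :: "real set \<Rightarrow> real \<Rightarrow> real \<Rightarrow> real" where
  "gT T t0 r = (if r \<le> t0 then t0 else Sup (T \<inter> {t0..r}))"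

primrec pic :: "real set \<Rightarrow> real \<Rightarrow> real^'n^'n \<Rightarrow> real^'n \<Rightarrow> nat \<Rightarrow> real \<Rightarrow> real^'n" where
  "pic T t0 M p 0 = (\<lambda>s. p)"
| "pic T t0 M p (Suc k) = (\<lambda>s. integral {t0..s} (\<lambda>r. M *v pic T t0 M p k (gT T t0 r)))"

definition ysol :: "real set \<Rightarrow> real \<Rightarrow> real^'n^'n \<Rightarrow> real^'n \<Rightarrow> real \<Rightarrow> real^'n" where
  "ysol T' t0' M p s = (\<Sum>k. pic T' t0' M p k s)"

context
  fixes T :: "real set" and t0 :: real
  assumes cT: "closed T" and t0T: "t0 \<in> T"
begin

lemma g_basic:
  assumes "t0 \<le> r" shows "gT T t0 r \<in> T" "t0 \<le> gT T t0 r" "gT T t0 r \<le> r"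
proof -
  have ne: "T \<inter> {t0..r} \<noteq> {}" using assms t0T by auto
  have bd: "bdd_above (T \<inter> {t0..r})" by (rule bdd_aboveI[of _ r]) auto
  have cl: "closed (T \<inter> {t0..r})" using cT by (intro closed_Int) auto
  have mem: "Sup (T \<inter> {t0..r}) \<in> T \<inter> {t0..r}" by (rule closed_contains_Sup[OF ne bd cl])
  have "gT T t0 r \<in> T \<inter> {t0..r}"
  proof (cases "r \<le> t0")
    case True then have "r = t0" using assms by simp
    then show ?thesis using t0T by (simp add: gT_def)
  next
    case False then show ?thesis using mem by (simp add: gT_def)
  qed
  then show "gT T t0 r \<in> T" "t0 \<le> gT T t0 r" "gT T t0 r \<le> r" by auto
qed

lemma g_ge: "t0 \<le> gT T t0 r"
proof (cases "t0 \<le> r")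
  case True then show ?thesis by (rule g_basic)
next
  case False then show ?thesis by (simp add: gT_def)
qed

lemma g_lower:
  assumes "s \<in> T" "t0 \<le> s" "s \<le> r" shows "s \<le> gT T t0 r"
proof (cases "r \<le> t0")
  case True then show ?thesis using assms by (simp add: gT_def)
next
  case False
  have bd: "bdd_above (T \<inter> {t0..r})" by (rule bdd_aboveI[of _ r]) auto
  have "s \<le> Sup (T \<inter> {t0..r})" using assms by (intro cSup_upper bd) auto
  then show ?thesis using False by (simp add: gT_def)
qed

lemma g_mono: "mono (gT T t0)"
proof (rule monoI)
  fix r r' :: real assume rr: "r \<le> r'"
  show "gT T t0 r \<le> gT T t0 r'"
  proof (cases "r \<le> t0")
    case True then show ?thesis using g_ge[of r'] by (simp add: gT_def)
  next
    case False
    then show ?thesis using g_basic[of r] rr t0T by (intro g_lower) auto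
  qed
qed

lemma g_id: assumes "t \<in> T" "t0 \<le> t" shows "gT T t0 t = t"
  using g_basic[of t] g_lower[of t t] assms by (meson order_antisym order_refl)

lemma g_gap:
  assumes "t \<in> T" "t0 \<le> t" "t \<le> r" "\<And>u. u \<in> T \<Longrightarrow> t < u \<Longrightarrow> r < u"
  shows "gT T t0 r = t"
proof -
  have "gT T t0 r \<in> T" "gT T t0 r \<le> r" using g_basic assms by auto
  then have "\<not> t < gT T t0 r" using assms(4) by force
  moreover have "t \<le> gT T t0 r" using g_lower assms by auto
  ultimately show ?thesis by simp
qed

lemma int_comp:
  fixes f :: "real \<Rightarrow> real^'n" and M :: "real^'n^'n"
  assumes f: "continuous_on {t0..} f"
  shows "(\<lambda>r. M *v f (gT T t0 r)) integrable_on {a..b}"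
proof -
  define F where "F = (\<lambda>x. M *v f (max t0 x))"
  have c1: "continuous_on UNIV (\<lambda>x. f (max t0 x))"
    by (rule continuous_on_compose2[OF f]) (auto intro: continuous_intros)
  have cF: "continuous_on UNIV F" unfolding F_def
    by (rule bounded_linear.continuous_on[OF matrix_vector_mul_bounded_linear c1])
  have eq: "(\<lambda>r. M *v f (gT T t0 r)) = F \<circ> gT T t0"
    by (auto simp: F_def o_def max_absorb2 g_ge)
  have meas: "F \<circ> gT T t0 \<in> borel_measurable borel"
    by (rule measurable_comp[OF borel_measurable_mono[OF g_mono] borel_measurable_continuous_onI[OF cF]])
  have meas': "F \<circ> gT T t0 \<in> borel_measurable (lebesgue_on {a..b})"
    using measurable_comp[OF id_borel_measurable_lebesgue_on meas] by (simp add: o_def)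
  have cpt: "compact (F ` {t0..max t0 b})"
    by (intro compact_continuous_image continuous_on_subset[OF cF]) auto
  then obtain B where B: "\<And>y. y \<in> F ` {t0..max t0 b} \<Longrightarrow> norm y \<le> B"
    using compact_imp_bounded bounded_iff by metis
  have nb: "norm ((F \<circ> gT T t0) r) \<le> B" if "r \<in> {a..b}" for r
  proof -
    have "gT T t0 r \<in> {t0..max t0 b}"
    proof (cases "t0 \<le> r")
      case True then show ?thesis using g_basic[of r] that by auto
    next
      case False then show ?thesis by (simp add: gT_def)
    qed
    then show ?thesis using B by auto
  qed
  have "(F \<circ> gT T t0) integrable_on {a..b}"
    by (rule measurable_bounded_by_integrable_imp_integrable[OF meas' _ nb]) auto
  then show ?thesis using eq by simp
qed

lemma cont_int:
  fixes f :: "real \<Rightarrow> real^'n" and M :: "real^'n^'n"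
  assumes f: "continuous_on {t0..} f"
  shows "continuous_on {t0..} (\<lambda>s. integral {t0..s} (\<lambda>r. M *v f (gT T t0 r)))"
  unfolding continuous_on_eq_continuous_within
proof
  fix x assume x: "x \<in> {t0..}"
  let ?b = "x + 1"
  have "continuous_on {t0..?b} (\<lambda>s. integral {t0..s} (\<lambda>r. M *v f (gT T t0 r)))"
    by (rule indefinite_integral_continuous_1[OF int_comp[OF f]])
  then have c: "continuous (at x within {t0..?b}) (\<lambda>s. integral {t0..s} (\<lambda>r. M *v f (gT T t0 r)))"
    using x by (simp add: continuous_on_eq_continuous_within)
  have "at x within {t0..} = at x within {t0..?b}"
    by (rule at_within_nhd[of _ "{..<?b}"]) auto
  then show "continuous (at x within {t0..}) (\<lambda>s. integral {t0..s} (\<lambda>r. M *v f (gT T t0 r)))"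
    using c by (simp add: continuous_within)
qed

lemma int_pow:
  assumes "t0 \<le> s"
  shows "integral {t0..s} (\<lambda>r. (r - t0)^k) = (s - t0)^(Suc k) / Suc k"
proof -
  have "((\<lambda>r. (r - t0)^k) has_integral ((\<lambda>r. (r - t0)^(Suc k) / Suc k) s - (\<lambda>r. (r - t0)^(Suc k) / Suc k) t0)) {t0..s}"
  proof (rule fundamental_theorem_of_calculus[OF assms])
    fix x assume "x \<in> {t0..s}"
    have "((\<lambda>r. (r - t0)^(Suc k) / Suc k) has_real_derivative (r - t0)^k) (at r within {t0..s})" for r
      by (rule derivative_eq_intros refl | simp)+
    then show "((\<lambda>r. (r - t0)^(Suc k) / Suc k) has_vector_derivative (x - t0)^k) (at x within {t0..s})"
      by (simp add: has_real_derivative_iff_has_vector_derivative)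
  qed
  then show ?thesis by (simp add: integral_unique)
qed

lemma pic_cont: "continuous_on {t0..} (pic T t0 M p k)"
proof (induction k)
  case 0 then show ?case by (simp add: continuous_on_const)
next
  case (Suc k) then show ?case by (simp add: cont_int)
qed

lemma pic_bound:
  fixes M :: "real^'n^'n"
  assumes m: "\<And>v. norm (M *v v) \<le> m * norm v" "0 \<le> m"
  shows "t0 \<le> s \<Longrightarrow> norm (pic T t0 M p k s) \<le> (m*(s-t0))^k / fact k * norm p"
proof (induction k arbitrary: s)
  case 0 then show ?case by simp
next
  case (Suc k)
  let ?c = "m^(Suc k) * norm p / fact k"
  have "norm (pic T t0 M p (Suc k) s) \<le> integral {t0..s} (\<lambda>r. ?c *\<^sub>R (r - t0)^k)"
    unfolding pic.simps
  proof (rule integral_norm_bound_integral)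
    show "(\<lambda>r. M *v pic T t0 M p k (gT T t0 r)) integrable_on {t0..s}"
      by (rule int_comp[OF pic_cont])
    show "(\<lambda>r. ?c *\<^sub>R (r - t0)^k) integrable_on {t0..s}"
      by (intro integrable_continuous_interval continuous_intros)
    fix r assume r: "r \<in> {t0..s}"
    have g: "t0 \<le> gT T t0 r" "gT T t0 r \<le> r" using g_basic[of r] r by auto
    have "norm (M *v pic T t0 M p k (gT T t0 r)) \<le> m * norm (pic T t0 M p k (gT T t0 r))" by (rule m)
    also have "\<dots> \<le> m * ((m*(gT T t0 r - t0))^k / fact k * norm p)"
      using Suc.IH[OF g(1)] m(2) by (rule mult_left_mono)
    also have "\<dots> \<le> m * ((m*(r - t0))^k / fact k * norm p)"
      using g m(2) by (intro mult_left_mono mult_right_mono divide_right_mono power_mono) auto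
    also have "\<dots> = ?c *\<^sub>R (r - t0)^k" by (simp add: power_mult_distrib)
    finally show "norm (M *v pic T t0 M p k (gT T t0 r)) \<le> ?c *\<^sub>R (r - t0)^k" .
  qed
  also have "\<dots> = ?c * ((s - t0)^(Suc k) / Suc k)" using int_pow[OF Suc.prems] by simp
  also have "\<dots> = (m*(s-t0))^(Suc k) / fact (Suc k) * norm p"
    by (simp only: power_mult_distrib fact_Suc of_nat_mult) (simp add: field_simps)
  finally show ?case .
qed

lemma cont_local:
  fixes h :: "real \<Rightarrow> 'a::topological_space"
  assumes "\<And>b. t0 \<le> b \<Longrightarrow> continuous_on {t0..b} h"
  shows "continuous_on {t0..} h"
  unfolding continuous_on_eq_continuous_within
proof
  fix x assume x: "x \<in> {t0..}"
  have c: "continuous (at x within {t0..x+1}) h"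
    using assms[of "x+1"] x by (simp add: continuous_on_eq_continuous_within)
  have "at x within {t0..} = at x within {t0..x+1}"
    by (rule at_within_nhd[of _ "{..<x+1}"]) auto
  then show "continuous (at x within {t0..}) h" using c by (simp add: continuous_within)
qed

lemma pic_unif:
  fixes M :: "real^'n^'n"
  assumes m: "\<And>v. norm (M *v v) \<le> m * norm v" "0 \<le> m" and b: "t0 \<le> b"
  shows "uniform_limit {t0..b} (\<lambda>N s. \<Sum>k<N. pic T t0 M p k s) (\<lambda>s. \<Sum>k. pic T t0 M p k s) sequentially"
proof (rule Weierstrass_m_test)
  fix k s assume s: "s \<in> {t0..b}"
  have "norm (pic T t0 M p k s) \<le> (m*(s-t0))^k / fact k * norm p"
    using pic_bound[OF m] s by auto
  also have "\<dots> \<le> (m*(b-t0))^k / fact k * norm p"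
    using s m(2) by (intro mult_right_mono divide_right_mono power_mono mult_left_mono) auto
  finally show "norm (pic T t0 M p k s) \<le> (m*(b-t0))^k / fact k * norm p" .
next
  have "summable (\<lambda>k. norm p * (inverse (fact k) * (m*(b-t0))^k))"
    by (intro summable_mult summable_exp)
  then show "summable (\<lambda>k. (m*(b-t0))^k / fact k * norm p)"
    by (simp add: field_simps)
qed

lemma ysol_cont:
  fixes M :: "real^'n^'n"
  assumes m: "\<And>v. norm (M *v v) \<le> m * norm v" "0 \<le> m"
  shows "continuous_on {t0..} (ysol T t0 M p)"
proof (rule cont_local)
  fix b assume b: "t0 \<le> b"
  show "continuous_on {t0..b} (ysol T t0 M p)"
    unfolding ysol_def
  proof (rule uniform_limit_theorem[OF _ pic_unif[OF m b]])
    show "\<forall>\<^sub>F n in sequentially. continuous_on {t0..b} (\<lambda>s. \<Sum>k<n. pic T t0 M p k s)"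
      by (intro always_eventually allI continuous_on_sum continuous_on_subset[OF pic_cont]) auto
  qed simp
qed

lemma ysol_eq:
  fixes M :: "real^'n^'n"
  assumes m: "\<And>v. norm (M *v v) \<le> m * norm v" "0 \<le> m" and s: "t0 \<le> s"
  shows "ysol T t0 M p s = p + integral {t0..s} (\<lambda>r. M *v ysol T t0 M p (gT T t0 r))"
proof -
  define P where "P = (\<lambda>N s. \<Sum>k<N. pic T t0 M p k s)"
  define y where "y = ysol T t0 M p"
  have ul: "uniform_limit {t0..s} P y sequentially"
    using pic_unif[OF m s] by (simp add: P_def y_def ysol_def[abs_def])
  have bl: "bounded_linear ((*v) M)" by (rule matrix_vector_mul_bounded_linear)
  have PS: "P (Suc N) s = p + integral {t0..s} (\<lambda>r. M *v P N (gT T t0 r))" for N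
  proof -
    have "P (Suc N) s = pic T t0 M p 0 s + (\<Sum>k<N. pic T t0 M p (Suc k) s)"
      unfolding P_def by (rule sum.lessThan_Suc_shift)
    also have "(\<Sum>k<N. pic T t0 M p (Suc k) s) = (\<Sum>k<N. integral {t0..s} (\<lambda>r. M *v pic T t0 M p k (gT T t0 r)))"
      by simp
    also have "\<dots> = integral {t0..s} (\<lambda>r. \<Sum>k<N. M *v pic T t0 M p k (gT T t0 r))"
      by (rule integral_sum[symmetric]) (auto intro: int_comp pic_cont)
    also have "(\<lambda>r. \<Sum>k<N. M *v pic T t0 M p k (gT T t0 r)) = (\<lambda>r. M *v P N (gT T t0 r))"
    proof -
      have "(\<Sum>k<N'. M *v f k) = M *v (\<Sum>k<N'. f k)" for N' and f :: "nat \<Rightarrow> real^'n"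
        by (induction N') (simp_all add: matrix_vector_right_distrib)
      then show ?thesis unfolding P_def by simp
    qed
    finally show ?thesis by simp
  qed
  have cy: "continuous_on {t0..} y" unfolding y_def by (rule ysol_cont[OF m])
  have lim1: "(\<lambda>N. P (Suc N) s) \<longlonglongrightarrow> y s"
    using LIMSEQ_Suc[OF tendsto_uniform_limitI[OF ul, of s]] s by simp
  have lim2: "(\<lambda>N. P (Suc N) s) \<longlonglongrightarrow> p + integral {t0..s} (\<lambda>r. M *v y (gT T t0 r))"
    unfolding PS
  proof (intro tendsto_add tendsto_const tendstoI)
    fix e :: real assume e: "e > 0"
    define e' where "e' = e / (2 * (m * (s - t0) + 1))"
    have mp: "m * (s - t0) + 1 > 0" using m(2) s by (simp add: add_nonneg_pos)
    have e': "e' > 0" unfolding e'_def using e mp by simp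
    have "\<forall>\<^sub>F N in sequentially. \<forall>x\<in>{t0..s}. dist (P N x) (y x) < e'"
      by (rule uniform_limitD[OF ul e'])
    then show "\<forall>\<^sub>F N in sequentially. dist (integral {t0..s} (\<lambda>r. M *v P N (gT T t0 r))) (integral {t0..s} (\<lambda>r. M *v y (gT T t0 r))) < e"
    proof (rule eventually_mono)
      fix N assume H: "\<forall>x\<in>{t0..s}. dist (P N x) (y x) < e'"
      have i1: "(\<lambda>r. M *v P N (gT T t0 r)) integrable_on {t0..s}"
        by (rule int_comp) (auto simp: P_def intro: continuous_on_sum pic_cont)
      have i2: "(\<lambda>r. M *v y (gT T t0 r)) integrable_on {t0..s}"
        by (rule int_comp[OF cy])
      have "dist (integral {t0..s} (\<lambda>r. M *v P N (gT T t0 r))) (integral {t0..s} (\<lambda>r. M *v y (gT T t0 r)))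
          = norm (integral {t0..s} (\<lambda>r. M *v P N (gT T t0 r) - M *v y (gT T t0 r)))"
        by (simp add: dist_norm integral_diff[OF i1 i2])
      also have "\<dots> \<le> integral {t0..s} (\<lambda>r. m * e')"
      proof (rule integral_norm_bound_integral)
        show "(\<lambda>r. M *v P N (gT T t0 r) - M *v y (gT T t0 r)) integrable_on {t0..s}"
          by (rule integrable_diff[OF i1 i2])
        show "(\<lambda>r. m * e') integrable_on {t0..s}" by (rule integrable_const_ivl)
        fix r assume r: "r \<in> {t0..s}"
        have g: "gT T t0 r \<in> {t0..s}" using g_basic[of r] r by auto
        have "norm (M *v P N (gT T t0 r) - M *v y (gT T t0 r)) = norm (M *v (P N (gT T t0 r) - y (gT T t0 r)))"
          by (simp add: matrix_vector_mult_diff_distrib)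
        also have "\<dots> \<le> m * norm (P N (gT T t0 r) - y (gT T t0 r))" by (rule m)
        also have "\<dots> \<le> m * e'"
          using H g m(2) by (intro mult_left_mono) (auto simp: dist_norm less_imp_le)
        finally show "norm (M *v P N (gT T t0 r) - M *v y (gT T t0 r)) \<le> m * e'" .
      qed
      also have "\<dots> = (s - t0) * (m * e')" using s by simp
      also have "\<dots> \<le> (m * (s - t0) + 1) * e'" using e' by (simp add: algebra_simps)
      also have "\<dots> = e / 2"
      proof -
        have "\<And>x::real. x > 0 \<Longrightarrow> x * (e / (2 * x)) = e / 2" by simp
        then show ?thesis unfolding e'_def using mp by blast
      qed
      also have "\<dots> < e" using e by simp
      finally show "dist (integral {t0..s} (\<lambda>r. M *v P N (gT T t0 r))) (integral {t0..s} (\<lambda>r. M *v y (gT T t0 r))) < e" .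
    qed
  qed
  show ?thesis using LIMSEQ_unique[OF lim1 lim2] by (simp add: y_def)
qed

lemma sigma_cases:
  fixes S :: "real set"
  assumes cS: "closed S" and t: "t \<in> S"
  shows "sigma_ts S t = t \<or> (sigma_ts S t > t \<and> sigma_ts S t \<in> S \<and> (\<forall>u\<in>S. t < u \<longrightarrow> sigma_ts S t \<le> u))"
proof (cases "\<exists>u\<in>S. u > t")
  case False then show ?thesis by (simp add: sigma_ts_def)
next
  case True
  define A where "A = {u\<in>S. u > t}"
  have ne: "A \<noteq> {}" using True by (auto simp: A_def)
  have bd: "bdd_below A" by (rule bdd_belowI[of _ t]) (auto simp: A_def)
  have sig: "sigma_ts S t = Inf A" using True by (simp add: sigma_ts_def A_def)
  have ge: "t \<le> Inf A" by (rule cInf_greatest[OF ne]) (auto simp: A_def)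
  have low: "\<forall>u\<in>S. t < u \<longrightarrow> Inf A \<le> u" using bd by (auto simp: A_def intro: cInf_lower)
  have "Inf A \<in> closure A" by (rule closure_contains_Inf[OF ne bd])
  moreover have "closure A \<subseteq> S" using cS by (intro closure_minimal) (auto simp: A_def)
  ultimately have "Inf A \<in> S" by blast
  then show ?thesis using ge low sig by auto
qed

lemma ysol_diff:
  fixes M :: "real^'n^'n"
  assumes m: "\<And>v. norm (M *v v) \<le> m * norm v" "0 \<le> m" and ab: "t0 \<le> a" "a \<le> b"
  shows "ysol T t0 M p b - ysol T t0 M p a = integral {a..b} (\<lambda>r. M *v ysol T t0 M p (gT T t0 r))"
proof -
  have i: "(\<lambda>r. M *v ysol T t0 M p (gT T t0 r)) integrable_on {t0..b}"
    by (rule int_comp[OF ysol_cont[OF m]])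
  show ?thesis
    using ysol_eq[OF m, of a] ysol_eq[OF m, of b] ab Henstock_Kurzweil_Integration.integral_combine[OF ab(1) ab(2) i, symmetric]
    by (simp add: algebra_simps)
qed

lemma ysol_est:
  fixes M :: "real^'n^'n"
  assumes m: "\<And>v. norm (M *v v) \<le> m * norm v" "0 \<le> m" and ab: "t0 \<le> a" "a \<le> b"
    and H: "\<And>r. r \<in> {a..b} \<Longrightarrow> norm (M *v ysol T t0 M p (gT T t0 r) - c) \<le> e"
  shows "norm (ysol T t0 M p b - ysol T t0 M p a - (b - a) *\<^sub>R c) \<le> (b - a) * e"
proof -
  have i: "(\<lambda>r. M *v ysol T t0 M p (gT T t0 r)) integrable_on {a..b}"
    by (rule int_comp[OF ysol_cont[OF m]])
  have "ysol T t0 M p b - ysol T t0 M p a - (b - a) *\<^sub>R c = integral {a..b} (\<lambda>r. M *v ysol T t0 M p (gT T t0 r) - c)"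
    using ab by (simp add: ysol_diff[OF m ab] integral_diff[OF i integrable_const_ivl])
  also have "norm \<dots> \<le> integral {a..b} (\<lambda>r. e)"
    by (rule integral_norm_bound_integral) (auto intro: H integrable_diff[OF i integrable_const_ivl])
  also have "\<dots> = (b - a) * e" using ab by simp
  finally show ?thesis .
qed

lemma ysol_solution:
  fixes M :: "real^'n^'n"
  assumes m: "\<And>v. norm (M *v v) \<le> m * norm v" "0 \<le> m"
  shows "auto_solution T (\<lambda>v. M *v v) t0 (ysol T t0 M p)"
  unfolding auto_solution_def
proof (intro ballI impI)
  fix t assume tT: "t \<in> T" and tt: "t0 \<le> t"
  define y where "y = ysol T t0 M p"
  define T' where "T' = T \<inter> {t0..}"
  define \<sigma> where "\<sigma> = sigma_ts T' t"
  let ?c = "M *v y t"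
  have cT': "closed T'" unfolding T'_def using cT by (intro closed_Int) auto
  have tT': "t \<in> T'" using tT tt by (simp add: T'_def)
  have cy: "continuous_on {t0..} y" unfolding y_def by (rule ysol_cont[OF m])
  have est: "norm (y b - y a - (b - a) *\<^sub>R c) \<le> (b - a) * e"
    if "t0 \<le> a" "a \<le> b" "\<And>r. r \<in> {a..b} \<Longrightarrow> norm (M *v y (gT T t0 r) - c) \<le> e" for a b c e
    using ysol_est[OF m that[unfolded y_def]] unfolding y_def .
  show "has_delta_derivative (T \<inter> {t0..}) (ysol T t0 M p) (M *v ysol T t0 M p t) t"
    unfolding T'_def[symmetric] y_def[symmetric] has_delta_derivative_def \<sigma>_def[symmetric]
  proof (intro conjI allI impI, rule tT')
    fix e :: real assume e: "e > 0"
    define \<epsilon> where "\<epsilon> = e / (m + 1)"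
    have \<epsilon>: "\<epsilon> > 0" using e m(2) by (simp add: \<epsilon>_def)
    have me: "m * \<epsilon> \<le> e"
    proof -
      have "m * \<epsilon> \<le> (m + 1) * \<epsilon>" using \<epsilon> by simp
      also have "\<dots> = e" using m(2) by (simp add: \<epsilon>_def)
      finally show ?thesis .
    qed
    obtain d1 where d1: "d1 > 0" and D1: "\<And>u. u \<in> {t0..} \<Longrightarrow> dist u t < d1 \<Longrightarrow> dist (y u) (y t) < \<epsilon>"
      using cy tt \<epsilon> unfolding continuous_on_iff by (metis atLeast_iff)
    have close: "norm (M *v y (gT T t0 r) - ?c) \<le> m * \<epsilon>"
      if "\<bar>gT T t0 r - t\<bar> < d1" for r
    proof -
      have "norm (M *v y (gT T t0 r) - ?c) = norm (M *v (y (gT T t0 r) - y t))"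
        by (simp add: matrix_vector_mult_diff_distrib)
      also have "\<dots> \<le> m * norm (y (gT T t0 r) - y t)" by (rule m)
      also have "\<dots> \<le> m * \<epsilon>"
        using D1[of "gT T t0 r"] that g_ge[of r] m(2)
        by (intro mult_left_mono) (auto simp: dist_norm less_imp_le)
      finally show ?thesis .
    qed
    have left: "norm (y t - y s - (t - s) *\<^sub>R ?c) \<le> (t - s) * e"
      if s: "s \<in> T'" "s \<le> t" "\<bar>s - t\<bar> < d1" for s
    proof -
      have "norm (y t - y s - (t - s) *\<^sub>R ?c) \<le> (t - s) * (m * \<epsilon>)"
      proof (rule est)
        show "t0 \<le> s" "s \<le> t" using s by (auto simp: T'_def)
        fix r assume r: "r \<in> {s..t}"
        have "s \<le> gT T t0 r" using s r by (intro g_lower) (auto simp: T'_def)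
        moreover have "gT T t0 r \<le> r" using g_basic[of r] r s by (auto simp: T'_def)
        ultimately have "\<bar>gT T t0 r - t\<bar> < d1" using r s by auto
        then show "norm (M *v y (gT T t0 r) - ?c) \<le> m * \<epsilon>" by (rule close)
      qed
      also have "\<dots> \<le> (t - s) * e" using s me by (intro mult_left_mono) auto
      finally show ?thesis .
    qed
    have right: "norm (y s - y t - (s - t) *\<^sub>R ?c) \<le> (s - t) * e"
      if s: "s \<in> T'" "t \<le> s" "\<bar>s - t\<bar> < d1" for s
    proof -
      have "norm (y s - y t - (s - t) *\<^sub>R ?c) \<le> (s - t) * (m * \<epsilon>)"
      proof (rule est)
        show "t0 \<le> t" "t \<le> s" using s tt by auto
        fix r assume r: "r \<in> {t..s}"
        have "t \<le> gT T t0 r" using tT tt r by (intro g_lower) auto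
        moreover have "gT T t0 r \<le> r" using g_basic[of r] r tt by auto
        ultimately have "\<bar>gT T t0 r - t\<bar> < d1" using r s by auto
        then show "norm (M *v y (gT T t0 r) - ?c) \<le> m * \<epsilon>" by (rule close)
      qed
      also have "\<dots> \<le> (s - t) * e" using s me by (intro mult_left_mono) auto
      finally show ?thesis .
    qed
    show "\<exists>d>0. \<forall>s\<in>T'. \<bar>s - t\<bar> < d \<longrightarrow> norm (y \<sigma> - y s - (\<sigma> - s) *\<^sub>R ?c) \<le> e * \<bar>\<sigma> - s\<bar>"
    proof (cases "\<sigma> = t")
      case True
      show ?thesis
      proof (intro exI conjI ballI impI, rule d1)
        fix s assume s: "s \<in> T'" "\<bar>s - t\<bar> < d1"
        show "norm (y \<sigma> - y s - (\<sigma> - s) *\<^sub>R ?c) \<le> e * \<bar>\<sigma> - s\<bar>"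
        proof (cases "s \<le> t")
          case True
          then show ?thesis using left[OF s(1) True s(2)] \<open>\<sigma> = t\<close> by (simp add: mult.commute)
        next
          case False
          have "norm (y \<sigma> - y s - (\<sigma> - s) *\<^sub>R ?c) = norm (y s - y t - (s - t) *\<^sub>R ?c)"
            using \<open>\<sigma> = t\<close> by (metis (no_types, lifting) minus_diff_eq norm_minus_cancel scaleR_minus_left diff_minus_eq_add diff_diff_eq2 add.commute)
          also have "\<dots> \<le> (s - t) * e" using right[OF s(1) _ s(2)] False by simp
          finally show ?thesis using False \<open>\<sigma> = t\<close> by (simp add: mult.commute)
        qed
      qed
    next
      case False
      then have sg: "\<sigma> > t" "\<sigma> \<in> T'" "\<And>u. u \<in> T' \<Longrightarrow> t < u \<Longrightarrow> \<sigma> \<le> u"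
        using sigma_cases[OF cT' tT'] unfolding \<sigma>_def by auto
      have jump: "y \<sigma> - y t = (\<sigma> - t) *\<^sub>R ?c"
      proof -
        have "y \<sigma> - y t = integral {t..\<sigma>} (\<lambda>r. M *v y (gT T t0 r))"
          unfolding y_def using sg(1) tt by (intro ysol_diff[OF m]) auto
        also have "\<dots> = integral {t..\<sigma>} (\<lambda>r. ?c)"
        proof (rule integral_spike[of "{\<sigma>}"])
          show "negligible {\<sigma>}" by simp
          fix r assume r: "r \<in> {t..\<sigma>} - {\<sigma>}"
          have "gT T t0 r = t"
          proof (rule g_gap[OF tT tt])
            show "t \<le> r" using r by auto
            fix u assume "u \<in> T" "t < u"
            then have "\<sigma> \<le> u" using sg(3)[of u] tt by (auto simp: T'_def)
            then show "r < u" using r by auto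
          qed
          then show "?c = M *v y (gT T t0 r)" by simp
        qed
        also have "\<dots> = (\<sigma> - t) *\<^sub>R ?c" using sg(1) by simp
        finally show ?thesis .
      qed
      show ?thesis
      proof (intro exI conjI ballI impI)
        show "min d1 (\<sigma> - t) > 0" using d1 sg(1) by simp
        fix s assume s: "s \<in> T'" "\<bar>s - t\<bar> < min d1 (\<sigma> - t)"
        have st: "s \<le> t"
        proof (rule ccontr)
          assume "\<not> s \<le> t"
          then have "\<sigma> \<le> s" using sg(3)[OF s(1)] by simp
          then show False using s by auto
        qed
        have "y \<sigma> - y s - (\<sigma> - s) *\<^sub>R ?c = (y t - y s - (t - s) *\<^sub>R ?c) + (y \<sigma> - y t - (\<sigma> - t) *\<^sub>R ?c)"
          by (simp add: algebra_simps)
        also have "\<dots> = y t - y s - (t - s) *\<^sub>R ?c" using jump by simp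
        finally have eq: "y \<sigma> - y s - (\<sigma> - s) *\<^sub>R ?c = y t - y s - (t - s) *\<^sub>R ?c" .
        have "norm (y \<sigma> - y s - (\<sigma> - s) *\<^sub>R ?c) \<le> (t - s) * e"
          unfolding eq using left[OF s(1) st] s by simp
        also have "\<dots> \<le> e * \<bar>\<sigma> - s\<bar>" using st sg(1) e by (simp add: mult.commute)
        finally show "norm (y \<sigma> - y s - (\<sigma> - s) *\<^sub>R ?c) \<le> e * \<bar>\<sigma> - s\<bar>" .
      qed
    qed
  qed
qed

lemma existence:
  fixes M :: "real^'n^'n"
  shows "\<exists>y. auto_solution T (\<lambda>v. M *v v) t0 y \<and> y t0 = p"
proof -
  obtain m where m: "m > 0" "\<And>v. norm (M *v v) \<le> norm v * m"
    using bounded_linear.pos_bounded[OF matrix_vector_mul_bounded_linear[of M]] by blast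
  have m': "\<And>v. norm (M *v v) \<le> m * norm v" "0 \<le> m" using m by (auto simp: mult.commute)
  show ?thesis
  proof (intro exI conjI)
    show "auto_solution T (\<lambda>v. M *v v) t0 (ysol T t0 M p)" by (rule ysol_solution[OF m'])
    show "ysol T t0 M p t0 = p" using ysol_eq[OF m', of t0] by simp
  qed
qed

end

theorem mainTheorem5:
  fixes T :: "real set" and A :: "real^'n^'n" and B :: "real^'m^'n"
  assumes "time_scale T"
    and "unbounded_above T"
    and "bounded_graininess T"
    and "positive_ctrl T A B"
    and "positively_stabilizable T A B"
  shows "\<forall>c\<in>spec A. c \<notin> stab_set T \<longrightarrow> rank (pbh_matrix c A B) = CARD('n)"
proof (intro ballI impI)
  fix c assume cS: "c \<notin> stab_set T"
  show "rank (pbh_matrix c A B) = CARD('n)"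
  proof (rule ccontr)
    assume r: "rank (pbh_matrix c A B) \<noteq> CARD('n)"
    obtain K :: "real^'n^'m" where pos: "positive_auto T (A + B ** K)" and pu: "pos_ues T (A + B ** K)"
      using assms(5) unfolding positively_stabilizable_def by blast
    obtain v where v: "v \<noteq> 0" "cmat (A + B ** K) *v v = c *s v"
      using eigen_from_pbh[OF r] by blast
    have cT: "closed T" using assms(1) by (simp add: time_scale_def)
    have ex: "\<And>t0 p. t0 \<in> T \<Longrightarrow> \<exists>y. auto_solution T (\<lambda>v. (A + B ** K) *v v) t0 y \<and> y t0 = p"
      using existence[OF cT] by blast
    obtain K' \<alpha> where b: "\<alpha> > 0" "K' \<ge> 1" "\<forall>t0\<in>T. \<forall>x. auto_solution T (\<lambda>v. (A + B ** K) *v v) t0 x \<longrightarrow>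
            (\<forall>t\<in>T. t0 \<le> t \<longrightarrow> norm (x t) \<le> K' * exp (- \<alpha> * (t - t0)) * norm (x t0))"
      using bound_all[OF pos pu ex] by blast
    have "c \<in> stab_set T"
      by (rule stab_from_bound[OF b(1) b(2) _ v]) (use b(3) in blast)
    then show False using cS by simp
  qed
qed

end
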